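(* Let $q\geq4$ be an even integer and let $(X,\{R_i\}_{i=0}^3)$ be a symmetric 3-class association scheme with adjacency matrices $A_0=I,A_1,A_2,A_3$, intersection numbers $p_{ij}^k$, and first eigenmatrix \[ P=\begin{bmatrix}1&\frac{q^2}{2}-q&\frac{q^2}{2}&q-2\\ 1&\frac q2&-\frac q2&-1\\ 1&-\frac q2+1&-\frac q2&q-2\\ 1&-\frac q2&\frac q2&-1\end{bmatrix}. \] Let $W=I+\sum_{i=1}^3w_iA_i$ be a type-II matrix. Then \[ H(W)=\{w_i^{\pm2}\mid i=1,2,3\}\cup\left\{\left(\frac{w_{i_1}w_{i_2}}{w_{i_3}}\right)^{\pm1}\;\middle|\;1\leq i_1,i_2,i_3\leq3,\ p_{i_2,i_3}^{i_1}>0\right\}\cup\left\{\frac{w_{i_1}w_{i_2}}{w_{j_1}w_{j_2}}\;\middle|\;i_1,i_2,j_1,j_2\in\{1,2,3\}\right\}. \]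
   Context: An association scheme $(X,\{R_i\}_{i=0}^d)$ is a partition of $X\times X$ into relations $R_0=\{(x,x)\}$, $R_1,\dots,R_d$ such that for $(x,y)\in R_k$ the number $p_{ij}^k=|\{z:(x,z)\in R_i,(z,y)\in R_j\}|$ depends only on $i,j,k$; symmetric means each $R_i$ is symmetric; $A_i$ is the $(0,1)$-matrix of $R_i$. With primitive idempotents $E_0=\frac1{|X|}J,E_1,E_2,E_3$ of the span of the $A_i$, the first eigenmatrix is defined by $A_j=\sum_iP_{i,j}E_i$ (here $|X|=q^2-1$; the intersection numbers are determined by $P$). A type-II matrix is a square matrix $W$ of order $n$ with nonzero complex entries such that $W(W^{(-)})^\top=nI$, $W^{(-)}$ the entrywise inverse. The Haagerup set of $W$ (indexed by $X$) is \[ H(W)=\left\{\frac{W_{x_1,y_1}W_{x_2,y_2}}{W_{x_1,y_2}W_{x_2,y_1}}\;\middle|\;x_1,x_2,y_1,y_2\in X\right\}. \] *)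

theory Defs
  imports Complex_Main
begin

text \<open>An association scheme with d classes on a finite carrier X is given by a
  relation-index function R: R x y = i means (x,y) in R_i.\<close>

definition assoc_scheme :: "'a set \<Rightarrow> ('a \<Rightarrow> 'a \<Rightarrow> nat) \<Rightarrow> nat \<Rightarrow> bool" where
  "assoc_scheme X R d \<longleftrightarrow>
     finite X \<and> X \<noteq> {} \<and>
     (\<forall>x\<in>X. \<forall>y\<in>X. R x y \<le> d) \<and>
     (\<forall>x\<in>X. \<forall>y\<in>X. R x y = 0 \<longleftrightarrow> x = y) \<and>
     (\<forall>i\<le>d. \<exists>x\<in>X. \<exists>y\<in>X. R x y = i) \<and>
     (\<forall>i\<le>d. \<forall>j\<le>d. \<forall>x\<in>X. \<forall>y\<in>X. \<forall>x'\<in>X. \<forall>y'\<in>X.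
        R x y = R x' y' \<longrightarrow>
        card {z\<in>X. R x z = i \<and> R z y = j} = card {z\<in>X. R x' z = i \<and> R z y' = j})"

definition symmetric_scheme :: "'a set \<Rightarrow> ('a \<Rightarrow> 'a \<Rightarrow> nat) \<Rightarrow> bool" where
  "symmetric_scheme X R \<longleftrightarrow> (\<forall>x\<in>X. \<forall>y\<in>X. R x y = R y x)"

text \<open>Intersection number p_{ij}^k (well defined for an association scheme).\<close>
definition inter_num :: "'a set \<Rightarrow> ('a \<Rightarrow> 'a \<Rightarrow> nat) \<Rightarrow> nat \<Rightarrow> nat \<Rightarrow> nat \<Rightarrow> nat" where
  "inter_num X R i j k =
     (let (x, y) = (SOME (x, y). x \<in> X \<and> y \<in> X \<and> R x y = k)
      in card {z\<in>X. R x z = i \<and> R z y = j})"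

text \<open>Adjacency matrix A_i (complex matrices are functions on X \<times> X).\<close>
definition adj :: "('a \<Rightarrow> 'a \<Rightarrow> nat) \<Rightarrow> nat \<Rightarrow> 'a \<Rightarrow> 'a \<Rightarrow> complex" where
  "adj R i x y = (if R x y = i then 1 else 0)"

definition mmult :: "'a set \<Rightarrow> ('a \<Rightarrow> 'a \<Rightarrow> complex) \<Rightarrow> ('a \<Rightarrow> 'a \<Rightarrow> complex) \<Rightarrow> 'a \<Rightarrow> 'a \<Rightarrow> complex" where
  "mmult X M N x y = (\<Sum>z\<in>X. M x z * N z y)"

definition first_eigenmatrix ::
  "'a set \<Rightarrow> ('a \<Rightarrow> 'a \<Rightarrow> nat) \<Rightarrow> nat \<Rightarrow> (nat \<Rightarrow> nat \<Rightarrow> complex) \<Rightarrow> bool" where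
  "first_eigenmatrix X R d P \<longleftrightarrow>
     (\<exists>E :: nat \<Rightarrow> 'a \<Rightarrow> 'a \<Rightarrow> complex.
        (\<forall>x\<in>X. \<forall>y\<in>X. E 0 x y = 1 / of_nat (card X)) \<and>
        (\<forall>i\<le>d. \<exists>c :: nat \<Rightarrow> complex. \<forall>x\<in>X. \<forall>y\<in>X. E i x y = (\<Sum>j\<le>d. c j * adj R j x y)) \<and>
        (\<forall>i\<le>d. \<exists>x\<in>X. \<exists>y\<in>X. E i x y \<noteq> 0) \<and>
        (\<forall>i\<le>d. \<forall>j\<le>d. \<forall>x\<in>X. \<forall>y\<in>X.
            mmult X (E i) (E j) x y = (if i = j then E i x y else 0)) \<and>
        (\<forall>x\<in>X. \<forall>y\<in>X. (\<Sum>i\<le>d. E i x y) = (if x = y then 1 else 0)) \<and>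
        (\<forall>j\<le>d. \<forall>x\<in>X. \<forall>y\<in>X. adj R j x y = (\<Sum>i\<le>d. P i j * E i x y)))"

definition type_II :: "'a set \<Rightarrow> ('a \<Rightarrow> 'a \<Rightarrow> complex) \<Rightarrow> bool" where
  "type_II X W \<longleftrightarrow> (\<forall>x\<in>X. \<forall>y\<in>X. W x y \<noteq> 0) \<and>
     (\<forall>x\<in>X. \<forall>y\<in>X. (\<Sum>z\<in>X. W x z * inverse (W y z)) =
                     (if x = y then of_nat (card X) else 0))"

definition haagerup_set :: "'a set \<Rightarrow> ('a \<Rightarrow> 'a \<Rightarrow> complex) \<Rightarrow> complex set" where
  "haagerup_set X W = {W x1 y1 * W x2 y2 / (W x1 y2 * W x2 y1) | x1 x2 y1 y2.
                        x1 \<in> X \<and> x2 \<in> X \<and> y1 \<in> X \<and> y2 \<in> X}"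

definition P_q :: "nat \<Rightarrow> nat \<Rightarrow> nat \<Rightarrow> complex" where
  "P_q q i j = (let c = (of_nat q :: complex) in
     [[1, c^2/2 - c, c^2/2, c - 2],
      [1, c/2, - c/2, -1],
      [1, - c/2 + 1, - c/2, c - 2],
      [1, - c/2, c/2, -1]] ! i ! j)"

end

theory Submission
  imports Defs
begin
definition tri :: "'a set \<Rightarrow> ('a \<Rightarrow> 'a \<Rightarrow> nat) \<Rightarrow> nat \<Rightarrow> nat \<Rightarrow> nat \<Rightarrow> bool" where
  "tri X R i j k \<longleftrightarrow> (\<forall>x\<in>X. \<forall>y\<in>X. R x y = k \<longrightarrow> (\<exists>z\<in>X. R x z = i \<and> R z y = j))"

lemma as_fin: "assoc_scheme X R d \<Longrightarrow> finite X"
  unfolding assoc_scheme_def by (elim conjE)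
lemma as_ne: "assoc_scheme X R d \<Longrightarrow> X \<noteq> {}"
  unfolding assoc_scheme_def by (elim conjE)
lemma as_le: "assoc_scheme X R d \<Longrightarrow> x \<in> X \<Longrightarrow> y \<in> X \<Longrightarrow> R x y \<le> d"
  unfolding assoc_scheme_def by (elim conjE) (drule bspec, assumption, drule bspec, assumption)
lemma as_R0: "assoc_scheme X R d \<Longrightarrow> x \<in> X \<Longrightarrow> y \<in> X \<Longrightarrow> R x y = 0 \<longleftrightarrow> x = y"
  unfolding assoc_scheme_def by (elim conjE) (drule bspec, assumption, drule bspec, assumption)
lemma as_real: "assoc_scheme X R d \<Longrightarrow> i \<le> d \<Longrightarrow> \<exists>x\<in>X. \<exists>y\<in>X. R x y = i"
  unfolding assoc_scheme_def by (elim conjE) (drule spec, drule mp, assumption)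
lemma as_reg: "assoc_scheme X R d \<Longrightarrow> i \<le> d \<Longrightarrow> j \<le> d \<Longrightarrow> x \<in> X \<Longrightarrow> y \<in> X \<Longrightarrow> x' \<in> X \<Longrightarrow> y' \<in> X
   \<Longrightarrow> R x y = R x' y' \<Longrightarrow> card {z\<in>X. R x z = i \<and> R z y = j} = card {z\<in>X. R x' z = i \<and> R z y' = j}"
  unfolding assoc_scheme_def by (elim conjE) (drule spec, drule mp, assumption, drule spec, drule mp, assumption,
     drule bspec, assumption, drule bspec, assumption, drule bspec, assumption, drule bspec, assumption, drule mp, assumption)

lemma memI: "a \<in> S \<Longrightarrow> a = b \<Longrightarrow> b \<in> S" by simp

lemma inter_num_alt: "inter_num X R i j k = (case (SOME p. case p of (x, y) \<Rightarrow> x \<in> X \<and> y \<in> X \<and> R x y = k) of (x,y) \<Rightarrow> card {z\<in>X. R x z = i \<and> R z y = j})"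
  unfolding inter_num_def Let_def ..

lemma inter_pos:
  assumes AS: "assoc_scheme X R 3" and xyz: "x \<in> X" "y \<in> X" "z \<in> X"
    and r: "R x y = k" "R x z = i" "R z y = j" and ij: "i \<le> 3" "j \<le> 3"
  shows "inter_num X R i j k > 0"
proof -
  have ex: "\<exists>p. case p of (x, y) \<Rightarrow> x \<in> X \<and> y \<in> X \<and> R x y = k" using xyz r by (intro exI[of _ "(x, y)"]) simp
  obtain a b where ab: "(SOME p. case p of (x, y) \<Rightarrow> x \<in> X \<and> y \<in> X \<and> R x y = k) = (a, b)"
    by (cases "SOME p. case p of (x, y) \<Rightarrow> x \<in> X \<and> y \<in> X \<and> R x y = k") auto
  from someI_ex[OF ex] ab have abX: "a \<in> X" "b \<in> X" "R a b = k" by auto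
  have fin: "finite X" using AS by (rule as_fin)
  have "card {z\<in>X. R a z = i \<and> R z b = j} = card {z\<in>X. R x z = i \<and> R z y = j}"
    by (rule as_reg[OF AS ij(1) ij(2) abX(1) abX(2) xyz(1) xyz(2)]) (simp add: abX(3) r(1))
  also have "\<dots> > 0" using fin xyz r by (subst card_gt_0_iff) auto
  finally show ?thesis unfolding inter_num_alt ab prod.case .
qed

lemma inter_pos_rev:
  assumes AS: "assoc_scheme X R 3" and k: "k \<le> 3" and p: "inter_num X R i j k > 0"
  shows "\<exists>x\<in>X. \<exists>y\<in>X. \<exists>z\<in>X. R x y = k \<and> R x z = i \<and> R z y = j"
proof -
  obtain x0 y0 where xy0: "x0 \<in> X" "y0 \<in> X" "R x0 y0 = k" using as_real[OF AS k] by blast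
  have ex: "\<exists>p. case p of (x, y) \<Rightarrow> x \<in> X \<and> y \<in> X \<and> R x y = k"
    using xy0 by (intro exI[of _ "(x0, y0)"]) simp
  obtain a b where ab: "(SOME p. case p of (x, y) \<Rightarrow> x \<in> X \<and> y \<in> X \<and> R x y = k) = (a, b)"
    by (cases "SOME p. case p of (x, y) \<Rightarrow> x \<in> X \<and> y \<in> X \<and> R x y = k") auto
  from someI_ex[OF ex] ab have abX: "a \<in> X" "b \<in> X" "R a b = k" by auto
  from p have "card {z\<in>X. R a z = i \<and> R z b = j} > 0" unfolding inter_num_alt ab prod.case .
  then obtain z where "z \<in> X" "R a z = i" "R z b = j"
  proof -
    have "{z\<in>X. R a z = i \<and> R z b = j} \<noteq> {}" using \<open>card _ > 0\<close> by (metis card.empty less_irrefl)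
    then show ?thesis using that by blast
  qed
  then show ?thesis using abX by blast
qed


lemma S1I: "i \<in> {1..3} \<Longrightarrow> v = w i ^ 2 \<Longrightarrow> v \<in> {w i ^ 2 | i. i \<in> {1..3::nat}}" by blast
lemma S2I: "i \<in> {1..3} \<Longrightarrow> v = inverse (w i) ^ 2 \<Longrightarrow> v \<in> {inverse (w i) ^ 2 | i. i \<in> {1..3::nat}}" by blast
lemma S3I: "i1 \<in> {1..3} \<Longrightarrow> i2 \<in> {1..3} \<Longrightarrow> i3 \<in> {1..3} \<Longrightarrow> inter_num X R i2 i3 i1 > 0 \<Longrightarrow> v = w i1 * w i2 / w i3 \<Longrightarrow>
  v \<in> {w i1 * w i2 / w i3 | i1 i2 i3. i1 \<in> {1..3} \<and> i2 \<in> {1..3} \<and> i3 \<in> {1..3::nat} \<and> inter_num X R i2 i3 i1 > 0}" by blast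
lemma S4I: "i1 \<in> {1..3} \<Longrightarrow> i2 \<in> {1..3} \<Longrightarrow> i3 \<in> {1..3} \<Longrightarrow> inter_num X R i2 i3 i1 > 0 \<Longrightarrow> v = inverse (w i1 * w i2 / w i3) \<Longrightarrow>
  v \<in> {inverse (w i1 * w i2 / w i3) | i1 i2 i3. i1 \<in> {1..3} \<and> i2 \<in> {1..3} \<and> i3 \<in> {1..3::nat} \<and> inter_num X R i2 i3 i1 > 0}" by blast
lemma S5I: "i1 \<in> {1..3} \<Longrightarrow> i2 \<in> {1..3} \<Longrightarrow> j1 \<in> {1..3} \<Longrightarrow> j2 \<in> {1..3} \<Longrightarrow> v = w i1 * w i2 / (w j1 * w j2) \<Longrightarrow>
  v \<in> {w i1 * w i2 / (w j1 * w j2) | i1 i2 j1 j2. i1 \<in> {1..3} \<and> i2 \<in> {1..3} \<and> j1 \<in> {1..3} \<and> j2 \<in> {1..3::nat}}" by blast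

lemma main_gen:
  fixes w :: "nat \<Rightarrow> complex" and W :: "'a \<Rightarrow> 'a \<Rightarrow> complex"
  assumes AS: "assoc_scheme X R 3" and SY: "symmetric_scheme X R"
    and Wv: "\<And>x y. x \<in> X \<Longrightarrow> y \<in> X \<Longrightarrow> W x y = (if R x y = 0 then 1 else w (R x y))"
    and nz: "w 1 \<noteq> 0" "w 2 \<noteq> 0" "w 3 \<noteq> 0"
    and T111: "tri X R 1 1 1" and T112: "tri X R 1 1 2" and T121: "tri X R 1 2 1"
    and T122: "tri X R 1 2 2" and T132: "tri X R 1 3 2" and T211: "tri X R 2 1 1"
    and T212: "tri X R 2 1 2" and T231: "tri X R 2 3 1" and T312: "tri X R 3 1 2"
    and T321: "tri X R 3 2 1" and T322: "tri X R 3 2 2"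
  shows "haagerup_set X W =
           {w i ^ 2 | i. i \<in> {1..3}} \<union> {inverse (w i) ^ 2 | i. i \<in> {1..3}}
         \<union> {w i1 * w i2 / w i3 | i1 i2 i3. i1 \<in> {1..3} \<and> i2 \<in> {1..3} \<and> i3 \<in> {1..3}
                                         \<and> inter_num X R i2 i3 i1 > 0}
         \<union> {inverse (w i1 * w i2 / w i3) | i1 i2 i3. i1 \<in> {1..3} \<and> i2 \<in> {1..3} \<and> i3 \<in> {1..3}
                                         \<and> inter_num X R i2 i3 i1 > 0}
         \<union> {w i1 * w i2 / (w j1 * w j2) | i1 i2 j1 j2.
               i1 \<in> {1..3} \<and> i2 \<in> {1..3} \<and> j1 \<in> {1..3} \<and> j2 \<in> {1..3}}"
    (is "?H = ?S1 \<union> ?S2 \<union> ?S3 \<union> ?S4 \<union> ?S5")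
proof -
  define H where "H = haagerup_set X W"
  have Rle: "\<And>x y. x \<in> X \<Longrightarrow> y \<in> X \<Longrightarrow> R x y \<le> 3"
    and R0: "\<And>x y. x \<in> X \<Longrightarrow> y \<in> X \<Longrightarrow> R x y = 0 \<longleftrightarrow> x = y"
    and real: "\<And>i. i \<le> 3 \<Longrightarrow> \<exists>x\<in>X. \<exists>y\<in>X. R x y = i"
    subgoal by (rule as_le[OF AS])
    subgoal by (rule as_R0[OF AS])
    subgoal by (rule as_real[OF AS])
    done
  have sym: "\<And>x y. x \<in> X \<Longrightarrow> y \<in> X \<Longrightarrow> R x y = R y x" using SY unfolding symmetric_scheme_def by blast
  have nzi: "\<And>i. i \<in> {1..3} \<Longrightarrow> w i \<noteq> 0"
  proof -
    fix i :: nat assume "i \<in> {1..3}"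
    then have "i = 1 \<or> i = 2 \<or> i = 3" by auto
    then show "w i \<noteq> 0" using nz by auto
  qed
  have nz1: "w (Suc 0) \<noteq> 0" using nz(1) by simp
  have Hmem: "W x1 y1 * W x2 y2 / (W x1 y2 * W x2 y1) \<in> H" if "x1 \<in> X" "x2 \<in> X" "y1 \<in> X" "y2 \<in> X" for x1 x2 y1 y2
    unfolding H_def haagerup_set_def using that
    by (intro CollectI exI[of _ x1] exI[of _ x2] exI[of _ y1] exI[of _ y2]) simp
  have Wi: "W x y = w i" if "x \<in> X" "y \<in> X" "R x y = i" "i \<in> {1..3}" for x y i
    using Wv[OF that(1,2)] that(3,4) by simp
  have W0: "W x x = 1" if "x \<in> X" for x
    using Wv[OF that that] R0[OF that that] by simp
  have one: "1 \<in> H"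
  proof -
    obtain x where x: "x \<in> X" using as_ne[OF AS] by blast
    have "W x x * W x x / (W x x * W x x) \<in> H" using Hmem x by blast
    moreover have "W x x = 1" using Wv x R0 by simp
    ultimately show ?thesis by simp
  qed
  have cyc: "w a * w b / (w c * w d) \<in> H"
    if t1: "tri X R a d k" and t2: "tri X R c b k" and abcd: "a \<in> {1..3}" "b \<in> {1..3}" "c \<in> {1..3}" "d \<in> {1..3}"
      and k: "k \<le> 3" for a b c d k
  proof -
    obtain x1 x2 where x: "x1 \<in> X" "x2 \<in> X" "R x1 x2 = k" using real k by blast
    obtain y1 where y1: "y1 \<in> X" "R x1 y1 = a" "R y1 x2 = d" using t1 x unfolding tri_def by blast
    obtain y2 where y2: "y2 \<in> X" "R x1 y2 = c" "R y2 x2 = b" using t2 x unfolding tri_def by blast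
    have "W x1 y1 = w a" using Wi[OF x(1) y1(1) y1(2) abcd(1)] .
    moreover have "W x2 y2 = w b" using Wi[OF x(2) y2(1) _ abcd(2)] sym[OF x(2) y2(1)] y2(3) by simp
    moreover have "W x1 y2 = w c" using Wi[OF x(1) y2(1) y2(2) abcd(3)] .
    moreover have "W x2 y1 = w d" using Wi[OF x(2) y1(1) _ abcd(4)] sym[OF x(2) y1(1)] y1(3) by simp
    ultimately show ?thesis using Hmem[OF x(1,2) y1(1) y2(1)] by simp
  qed
  have ww: "W x y = (if R x y = 0 then 1 else w (R x y))" if "x \<in> X" "y \<in> X" for x y
    using Wv that by blast
  show ?thesis
  proof (rule set_eqI, rule iffI)
    fix v assume "v \<in> ?H"
    then obtain x1 x2 y1 y2 where X: "x1 \<in> X" "x2 \<in> X" "y1 \<in> X" "y2 \<in> X"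
      and v: "v = W x1 y1 * W x2 y2 / (W x1 y2 * W x2 y1)"
      unfolding haagerup_set_def by blast
    define a where "a = R x1 y1"
    define b where "b = R x2 y2"
    define c where "c = R x1 y2"
    define d where "d = R x2 y1"
    have le: "a \<le> 3" "b \<le> 3" "c \<le> 3" "d \<le> 3" using Rle X unfolding a_def b_def c_def d_def by auto
    have v': "v = (if a = 0 then 1 else w a) * (if b = 0 then 1 else w b) /
                  ((if c = 0 then 1 else w c) * (if d = 0 then 1 else w d))"
      unfolding v a_def b_def c_def d_def using ww X by simp
    have one5: "1 \<in> ?S5"
      by (rule S5I[of 1 1 1 1]) (use nz in simp_all)
    consider (A) "a \<noteq> 0" "b \<noteq> 0" "c \<noteq> 0" "d \<noteq> 0"
      | (B1) "a = 0" "b = 0" | (B2) "a = 0" "b \<noteq> 0" "c = 0" | (B3) "a = 0" "b \<noteq> 0" "c \<noteq> 0" "d = 0"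
      | (B4) "a = 0" "b \<noteq> 0" "c \<noteq> 0" "d \<noteq> 0"
      | (C1) "a \<noteq> 0" "b = 0" "c = 0" | (C2) "a \<noteq> 0" "b = 0" "c \<noteq> 0" "d = 0"
      | (C3) "a \<noteq> 0" "b = 0" "c \<noteq> 0" "d \<noteq> 0"
      | (D1) "a \<noteq> 0" "b \<noteq> 0" "c = 0" "d = 0" | (D2) "a \<noteq> 0" "b \<noteq> 0" "c = 0" "d \<noteq> 0"
      | (E) "a \<noteq> 0" "b \<noteq> 0" "c \<noteq> 0" "d = 0"
      by blast
    then show "v \<in> ?S1 \<union> ?S2 \<union> ?S3 \<union> ?S4 \<union> ?S5"
    proof cases
      case A
      then have "v \<in> ?S5" by (intro S5I[of a b c d]) (use A le v' in auto)
      then show ?thesis by blast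
    next
      case B1
      then have e: "x1 = y1" "x2 = y2" using R0 X unfolding a_def b_def by auto
      then have cd: "c = d" using sym X unfolding c_def d_def by auto
      show ?thesis
      proof (cases "c = 0")
        case True
        then have "v = 1" using v' B1 cd by simp
        then show ?thesis using one5 by blast
      next
        case False
        then have "v = inverse (w c) ^ 2" using v' B1 cd by (simp add: power2_eq_square field_simps)
        then have "v \<in> ?S2" by (intro S2I[of c]) (use False le in auto)
        then show ?thesis by blast
      qed
    next
      case B2
      then have e: "x1 = y1" "y1 = y2" using R0 X unfolding a_def c_def by auto
      then have "b = d" using sym X unfolding b_def d_def by auto
      then have "v = 1" using v' B2 le nzi by simp
      then show ?thesis using one5 by blast
    next
      case B3
      then have e: "x1 = y1" "x2 = y1" using R0 X unfolding a_def d_def by auto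
      then have "b = c" unfolding b_def c_def by simp
      then have "v = 1" using v' B3 le nzi by simp
      then show ?thesis using one5 by blast
    next
      case B4
      then have e: "x1 = y1" using R0 X unfolding a_def by auto
      have "inter_num X R d b c > 0"
        by (rule inter_pos[OF AS X(3) X(4) X(2)]) (use e sym X le in \<open>auto simp: b_def c_def d_def\<close>)
      moreover have "v = inverse (w c * w d / w b)" using v' B4 by simp
      ultimately have "v \<in> ?S4" by (intro S4I[of c d b]) (use B4 le in auto)
      then show ?thesis by blast
    next
      case C1
      then have e: "x2 = y2" "x1 = y2" using R0 X unfolding b_def c_def by auto
      then have "a = d" unfolding a_def d_def by simp
      then have "v = 1" using v' C1 le nzi by simp
      then show ?thesis using one5 by blast
    next
      case C2
      then have e: "x2 = y2" "x2 = y1" using R0 X unfolding b_def d_def by auto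
      then have "a = c" unfolding a_def c_def by simp
      then have "v = 1" using v' C2 le nzi by simp
      then show ?thesis using one5 by blast
    next
      case C3
      then have e: "x2 = y2" using R0 X unfolding b_def by auto
      have "inter_num X R d a c > 0"
        by (rule inter_pos[OF AS X(2) X(1) X(3)]) (use e sym X le in \<open>auto simp: a_def c_def d_def\<close>)
      moreover have "v = inverse (w c * w d / w a)" using v' C3 by simp
      ultimately have "v \<in> ?S4" by (intro S4I[of c d a]) (use C3 le in auto)
      then show ?thesis by blast
    next
      case D1
      then have e: "x1 = y2" "x2 = y1" using R0 X unfolding c_def d_def by auto
      then have "a = b" using sym X unfolding a_def b_def by auto
      then have "v = w a ^ 2" using v' D1 by (simp add: power2_eq_square)
      then have "v \<in> ?S1" by (intro S1I[of a]) (use D1 le in auto)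
      then show ?thesis by blast
    next
      case D2
      then have e: "x1 = y2" using R0 X unfolding c_def by auto
      have "inter_num X R b d a > 0"
        by (rule inter_pos[OF AS X(1) X(3) X(2)]) (use e sym X le in \<open>auto simp: a_def b_def d_def\<close>)
      moreover have "v = w a * w b / w d" using v' D2 by simp
      ultimately have "v \<in> ?S3" by (intro S3I[of a b d]) (use D2 le in auto)
      then show ?thesis by blast
    next
      case E
      then have e: "x2 = y1" using R0 X unfolding d_def by auto
      have "inter_num X R b c a > 0"
        by (rule inter_pos[OF AS X(3) X(1) X(4)]) (use e sym X le in \<open>auto simp: a_def b_def c_def\<close>)
      moreover have "v = w a * w b / w c" using v' E by simp
      ultimately have "v \<in> ?S3" by (intro S3I[of a b c]) (use E le in auto)
      then show ?thesis by blast
    qed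
  next
    fix v assume v: "v \<in> ?S1 \<union> ?S2 \<union> ?S3 \<union> ?S4 \<union> ?S5"
    have s1: "w i ^ 2 \<in> H" if i: "i \<in> {1..3}" for i
    proof -
      obtain x y where xy: "x \<in> X" "y \<in> X" "R x y = i" using real i by force
      have "W x y * W y x / (W x x * W y y) \<in> H" using Hmem xy by blast
      moreover have "W x y = w i" "W y x = w i" "W x x = 1" "W y y = 1"
        using Wi[OF xy i] Wi[OF xy(2,1) _ i] sym[OF xy(1,2)] xy(3) W0[OF xy(1)] W0[OF xy(2)] by simp_all
      ultimately show ?thesis by (simp add: power2_eq_square)
    qed
    have s2: "inverse (w i) ^ 2 \<in> H" if i: "i \<in> {1..3}" for i
    proof -
      obtain x y where xy: "x \<in> X" "y \<in> X" "R x y = i" using real i by force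
      have "W x x * W y y / (W x y * W y x) \<in> H" using Hmem xy by blast
      moreover have "W x y = w i" "W y x = w i" "W x x = 1" "W y y = 1"
        using Wi[OF xy i] Wi[OF xy(2,1) _ i] sym[OF xy(1,2)] xy(3) W0[OF xy(1)] W0[OF xy(2)] by simp_all
      ultimately show ?thesis by (simp add: power2_eq_square field_simps)
    qed
    have s3: "w i1 * w i2 / w i3 \<in> H" if i: "i1 \<in> {1..3}" "i2 \<in> {1..3}" "i3 \<in> {1..3}"
      and p: "inter_num X R i2 i3 i1 > 0" for i1 i2 i3
    proof -
      obtain x y z where xyz: "x \<in> X" "y \<in> X" "z \<in> X" "R x y = i1" "R x z = i2" "R z y = i3"
        using inter_pos_rev[OF AS _ p] i by auto
      have "W y x * W x z / (W y z * W x x) \<in> H" using Hmem xyz by blast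
      moreover have "W y x = w i1" "W x z = w i2" "W y z = w i3" "W x x = 1"
        using Wi[OF xyz(2,1) _ i(1)] Wi[OF xyz(1,3) xyz(5) i(2)] Wi[OF xyz(2,3) _ i(3)] W0[OF xyz(1)]
          sym[OF xyz(1,2)] sym[OF xyz(2,3)] xyz(4,6) by simp_all
      ultimately show ?thesis by simp
    qed
    have s4: "inverse (w i1 * w i2 / w i3) \<in> H" if i: "i1 \<in> {1..3}" "i2 \<in> {1..3}" "i3 \<in> {1..3}"
      and p: "inter_num X R i2 i3 i1 > 0" for i1 i2 i3
    proof -
      obtain x y z where xyz: "x \<in> X" "y \<in> X" "z \<in> X" "R x y = i1" "R x z = i2" "R z y = i3"
        using inter_pos_rev[OF AS _ p] i by auto
      have "W x x * W z y / (W x y * W z x) \<in> H" using Hmem xyz by blast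
      moreover have "W x y = w i1" "W z x = w i2" "W z y = w i3" "W x x = 1"
        using Wi[OF xyz(1,2) xyz(4) i(1)] Wi[OF xyz(3,1) _ i(2)] Wi[OF xyz(3,2) xyz(6) i(3)] W0[OF xyz(1)]
          sym[OF xyz(1,3)] xyz(5) by simp_all
      ultimately show ?thesis by simp
    qed
  have Q0: "1 \<in> H" by (rule one)
  have Q1: "w 1 * w 1 / (w 1 * w 2) \<in> H" by (rule cyc[OF T121 T111]) simp_all
  have Q2: "w 1 * w 1 / (w 1 * w 3) \<in> H" by (rule cyc[OF T132 T112]) simp_all
  have Q3: "w 1 * w 1 / (w 2 * w 2) \<in> H" by (rule cyc[OF T121 T211]) simp_all
  have Q4: "w 1 * w 1 / (w 2 * w 3) \<in> H" by (rule cyc[OF T132 T212]) simp_all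
  have Q5: "w 1 * w 1 / (w 3 * w 3) \<in> H" by (rule cyc[OF T132 T312]) simp_all
  have Q6: "w 1 * w 2 / (w 1 * w 1) \<in> H" by (rule cyc[OF T111 T121]) simp_all
  have Q7: "w 1 * w 2 / (w 1 * w 3) \<in> H" by (rule cyc[OF T132 T122]) simp_all
  have Q8: "w 1 * w 2 / (w 3 * w 3) \<in> H" by (rule cyc[OF T132 T322]) simp_all
  have Q9: "w 1 * w 3 / (w 1 * w 1) \<in> H" by (rule cyc[OF T112 T132]) simp_all
  have Q10: "w 1 * w 3 / (w 1 * w 2) \<in> H" by (rule cyc[OF T122 T132]) simp_all
  have Q11: "w 1 * w 3 / (w 2 * w 2) \<in> H" by (rule cyc[OF T121 T231]) simp_all
  have Q12: "w 2 * w 2 / (w 1 * w 1) \<in> H" by (rule cyc[OF T211 T121]) simp_all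
  have Q13: "w 2 * w 2 / (w 1 * w 3) \<in> H" by (rule cyc[OF T231 T121]) simp_all
  have Q14: "w 2 * w 2 / (w 3 * w 3) \<in> H" by (rule cyc[OF T231 T321]) simp_all
  have Q15: "w 2 * w 3 / (w 1 * w 1) \<in> H" by (rule cyc[OF T212 T132]) simp_all
  have Q16: "w 3 * w 3 / (w 1 * w 1) \<in> H" by (rule cyc[OF T312 T132]) simp_all
  have Q17: "w 3 * w 3 / (w 1 * w 2) \<in> H" by (rule cyc[OF T322 T132]) simp_all
  have Q18: "w 3 * w 3 / (w 2 * w 2) \<in> H" by (rule cyc[OF T321 T231]) simp_all
  have F1: "w 1 * w 1 / (w 1 * w 1) \<in> H" by (rule memI[OF Q0]) (simp add: field_simps nz nz1)
  have F2: "w 1 * w 1 / (w 1 * w 2) \<in> H" by (rule memI[OF Q1]) (simp add: field_simps nz nz1)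
  have F3: "w 1 * w 1 / (w 1 * w 3) \<in> H" by (rule memI[OF Q2]) (simp add: field_simps nz nz1)
  have F4: "w 1 * w 1 / (w 2 * w 1) \<in> H" by (rule memI[OF Q1]) (simp add: field_simps nz nz1)
  have F5: "w 1 * w 1 / (w 2 * w 2) \<in> H" by (rule memI[OF Q3]) (simp add: field_simps nz nz1)
  have F6: "w 1 * w 1 / (w 2 * w 3) \<in> H" by (rule memI[OF Q4]) (simp add: field_simps nz nz1)
  have F7: "w 1 * w 1 / (w 3 * w 1) \<in> H" by (rule memI[OF Q2]) (simp add: field_simps nz nz1)
  have F8: "w 1 * w 1 / (w 3 * w 2) \<in> H" by (rule memI[OF Q4]) (simp add: field_simps nz nz1)
  have F9: "w 1 * w 1 / (w 3 * w 3) \<in> H" by (rule memI[OF Q5]) (simp add: field_simps nz nz1)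
  have F10: "w 1 * w 2 / (w 1 * w 1) \<in> H" by (rule memI[OF Q6]) (simp add: field_simps nz nz1)
  have F11: "w 1 * w 2 / (w 1 * w 2) \<in> H" by (rule memI[OF Q0]) (simp add: field_simps nz nz1)
  have F12: "w 1 * w 2 / (w 1 * w 3) \<in> H" by (rule memI[OF Q7]) (simp add: field_simps nz nz1)
  have F13: "w 1 * w 2 / (w 2 * w 1) \<in> H" by (rule memI[OF Q0]) (simp add: field_simps nz nz1)
  have F14: "w 1 * w 2 / (w 2 * w 2) \<in> H" by (rule memI[OF Q1]) (simp add: field_simps nz nz1)
  have F15: "w 1 * w 2 / (w 2 * w 3) \<in> H" by (rule memI[OF Q2]) (simp add: field_simps nz nz1)
  have F16: "w 1 * w 2 / (w 3 * w 1) \<in> H" by (rule memI[OF Q7]) (simp add: field_simps nz nz1)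
  have F17: "w 1 * w 2 / (w 3 * w 2) \<in> H" by (rule memI[OF Q2]) (simp add: field_simps nz nz1)
  have F18: "w 1 * w 2 / (w 3 * w 3) \<in> H" by (rule memI[OF Q8]) (simp add: field_simps nz nz1)
  have F19: "w 1 * w 3 / (w 1 * w 1) \<in> H" by (rule memI[OF Q9]) (simp add: field_simps nz nz1)
  have F20: "w 1 * w 3 / (w 1 * w 2) \<in> H" by (rule memI[OF Q10]) (simp add: field_simps nz nz1)
  have F21: "w 1 * w 3 / (w 1 * w 3) \<in> H" by (rule memI[OF Q0]) (simp add: field_simps nz nz1)
  have F22: "w 1 * w 3 / (w 2 * w 1) \<in> H" by (rule memI[OF Q10]) (simp add: field_simps nz nz1)
  have F23: "w 1 * w 3 / (w 2 * w 2) \<in> H" by (rule memI[OF Q11]) (simp add: field_simps nz nz1)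
  have F24: "w 1 * w 3 / (w 2 * w 3) \<in> H" by (rule memI[OF Q1]) (simp add: field_simps nz nz1)
  have F25: "w 1 * w 3 / (w 3 * w 1) \<in> H" by (rule memI[OF Q0]) (simp add: field_simps nz nz1)
  have F26: "w 1 * w 3 / (w 3 * w 2) \<in> H" by (rule memI[OF Q1]) (simp add: field_simps nz nz1)
  have F27: "w 1 * w 3 / (w 3 * w 3) \<in> H" by (rule memI[OF Q2]) (simp add: field_simps nz nz1)
  have F28: "w 2 * w 1 / (w 1 * w 1) \<in> H" by (rule memI[OF Q6]) (simp add: field_simps nz nz1)
  have F29: "w 2 * w 1 / (w 1 * w 2) \<in> H" by (rule memI[OF Q0]) (simp add: field_simps nz nz1)
  have F30: "w 2 * w 1 / (w 1 * w 3) \<in> H" by (rule memI[OF Q7]) (simp add: field_simps nz nz1)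
  have F31: "w 2 * w 1 / (w 2 * w 1) \<in> H" by (rule memI[OF Q0]) (simp add: field_simps nz nz1)
  have F32: "w 2 * w 1 / (w 2 * w 2) \<in> H" by (rule memI[OF Q1]) (simp add: field_simps nz nz1)
  have F33: "w 2 * w 1 / (w 2 * w 3) \<in> H" by (rule memI[OF Q2]) (simp add: field_simps nz nz1)
  have F34: "w 2 * w 1 / (w 3 * w 1) \<in> H" by (rule memI[OF Q7]) (simp add: field_simps nz nz1)
  have F35: "w 2 * w 1 / (w 3 * w 2) \<in> H" by (rule memI[OF Q2]) (simp add: field_simps nz nz1)
  have F36: "w 2 * w 1 / (w 3 * w 3) \<in> H" by (rule memI[OF Q8]) (simp add: field_simps nz nz1)
  have F37: "w 2 * w 2 / (w 1 * w 1) \<in> H" by (rule memI[OF Q12]) (simp add: field_simps nz nz1)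
  have F38: "w 2 * w 2 / (w 1 * w 2) \<in> H" by (rule memI[OF Q6]) (simp add: field_simps nz nz1)
  have F39: "w 2 * w 2 / (w 1 * w 3) \<in> H" by (rule memI[OF Q13]) (simp add: field_simps nz nz1)
  have F40: "w 2 * w 2 / (w 2 * w 1) \<in> H" by (rule memI[OF Q6]) (simp add: field_simps nz nz1)
  have F41: "w 2 * w 2 / (w 2 * w 2) \<in> H" by (rule memI[OF Q0]) (simp add: field_simps nz nz1)
  have F42: "w 2 * w 2 / (w 2 * w 3) \<in> H" by (rule memI[OF Q7]) (simp add: field_simps nz nz1)
  have F43: "w 2 * w 2 / (w 3 * w 1) \<in> H" by (rule memI[OF Q13]) (simp add: field_simps nz nz1)
  have F44: "w 2 * w 2 / (w 3 * w 2) \<in> H" by (rule memI[OF Q7]) (simp add: field_simps nz nz1)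
  have F45: "w 2 * w 2 / (w 3 * w 3) \<in> H" by (rule memI[OF Q14]) (simp add: field_simps nz nz1)
  have F46: "w 2 * w 3 / (w 1 * w 1) \<in> H" by (rule memI[OF Q15]) (simp add: field_simps nz nz1)
  have F47: "w 2 * w 3 / (w 1 * w 2) \<in> H" by (rule memI[OF Q9]) (simp add: field_simps nz nz1)
  have F48: "w 2 * w 3 / (w 1 * w 3) \<in> H" by (rule memI[OF Q6]) (simp add: field_simps nz nz1)
  have F49: "w 2 * w 3 / (w 2 * w 1) \<in> H" by (rule memI[OF Q9]) (simp add: field_simps nz nz1)
  have F50: "w 2 * w 3 / (w 2 * w 2) \<in> H" by (rule memI[OF Q10]) (simp add: field_simps nz nz1)
  have F51: "w 2 * w 3 / (w 2 * w 3) \<in> H" by (rule memI[OF Q0]) (simp add: field_simps nz nz1)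
  have F52: "w 2 * w 3 / (w 3 * w 1) \<in> H" by (rule memI[OF Q6]) (simp add: field_simps nz nz1)
  have F53: "w 2 * w 3 / (w 3 * w 2) \<in> H" by (rule memI[OF Q0]) (simp add: field_simps nz nz1)
  have F54: "w 2 * w 3 / (w 3 * w 3) \<in> H" by (rule memI[OF Q7]) (simp add: field_simps nz nz1)
  have F55: "w 3 * w 1 / (w 1 * w 1) \<in> H" by (rule memI[OF Q9]) (simp add: field_simps nz nz1)
  have F56: "w 3 * w 1 / (w 1 * w 2) \<in> H" by (rule memI[OF Q10]) (simp add: field_simps nz nz1)
  have F57: "w 3 * w 1 / (w 1 * w 3) \<in> H" by (rule memI[OF Q0]) (simp add: field_simps nz nz1)
  have F58: "w 3 * w 1 / (w 2 * w 1) \<in> H" by (rule memI[OF Q10]) (simp add: field_simps nz nz1)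
  have F59: "w 3 * w 1 / (w 2 * w 2) \<in> H" by (rule memI[OF Q11]) (simp add: field_simps nz nz1)
  have F60: "w 3 * w 1 / (w 2 * w 3) \<in> H" by (rule memI[OF Q1]) (simp add: field_simps nz nz1)
  have F61: "w 3 * w 1 / (w 3 * w 1) \<in> H" by (rule memI[OF Q0]) (simp add: field_simps nz nz1)
  have F62: "w 3 * w 1 / (w 3 * w 2) \<in> H" by (rule memI[OF Q1]) (simp add: field_simps nz nz1)
  have F63: "w 3 * w 1 / (w 3 * w 3) \<in> H" by (rule memI[OF Q2]) (simp add: field_simps nz nz1)
  have F64: "w 3 * w 2 / (w 1 * w 1) \<in> H" by (rule memI[OF Q15]) (simp add: field_simps nz nz1)
  have F65: "w 3 * w 2 / (w 1 * w 2) \<in> H" by (rule memI[OF Q9]) (simp add: field_simps nz nz1)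
  have F66: "w 3 * w 2 / (w 1 * w 3) \<in> H" by (rule memI[OF Q6]) (simp add: field_simps nz nz1)
  have F67: "w 3 * w 2 / (w 2 * w 1) \<in> H" by (rule memI[OF Q9]) (simp add: field_simps nz nz1)
  have F68: "w 3 * w 2 / (w 2 * w 2) \<in> H" by (rule memI[OF Q10]) (simp add: field_simps nz nz1)
  have F69: "w 3 * w 2 / (w 2 * w 3) \<in> H" by (rule memI[OF Q0]) (simp add: field_simps nz nz1)
  have F70: "w 3 * w 2 / (w 3 * w 1) \<in> H" by (rule memI[OF Q6]) (simp add: field_simps nz nz1)
  have F71: "w 3 * w 2 / (w 3 * w 2) \<in> H" by (rule memI[OF Q0]) (simp add: field_simps nz nz1)
  have F72: "w 3 * w 2 / (w 3 * w 3) \<in> H" by (rule memI[OF Q7]) (simp add: field_simps nz nz1)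
  have F73: "w 3 * w 3 / (w 1 * w 1) \<in> H" by (rule memI[OF Q16]) (simp add: field_simps nz nz1)
  have F74: "w 3 * w 3 / (w 1 * w 2) \<in> H" by (rule memI[OF Q17]) (simp add: field_simps nz nz1)
  have F75: "w 3 * w 3 / (w 1 * w 3) \<in> H" by (rule memI[OF Q9]) (simp add: field_simps nz nz1)
  have F76: "w 3 * w 3 / (w 2 * w 1) \<in> H" by (rule memI[OF Q17]) (simp add: field_simps nz nz1)
  have F77: "w 3 * w 3 / (w 2 * w 2) \<in> H" by (rule memI[OF Q18]) (simp add: field_simps nz nz1)
  have F78: "w 3 * w 3 / (w 2 * w 3) \<in> H" by (rule memI[OF Q10]) (simp add: field_simps nz nz1)
  have F79: "w 3 * w 3 / (w 3 * w 1) \<in> H" by (rule memI[OF Q9]) (simp add: field_simps nz nz1)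
  have F80: "w 3 * w 3 / (w 3 * w 2) \<in> H" by (rule memI[OF Q10]) (simp add: field_simps nz nz1)
  have F81: "w 3 * w 3 / (w 3 * w 3) \<in> H" by (rule memI[OF Q0]) (simp add: field_simps nz nz1)

    have s5: "\<forall>i1\<in>{1,2,3}. \<forall>i2\<in>{1,2,3}. \<forall>j1\<in>{1,2,3}. \<forall>j2\<in>{1,2,3}. w i1 * w i2 / (w j1 * w j2) \<in> H"
      apply (intro ballI)
      apply (elim insertE emptyE)
      apply (simp_all only: F1 F2 F3 F4 F5 F6 F7 F8 F9 F10 F11 F12 F13 F14 F15 F16 F17 F18 F19 F20 F21 F22 F23 F24 F25 F26 F27 F28 F29 F30 F31 F32 F33 F34 F35 F36 F37 F38 F39 F40 F41 F42 F43 F44 F45 F46 F47 F48 F49 F50 F51 F52 F53 F54 F55 F56 F57 F58 F59 F60 F61 F62 F63 F64 F65 F66 F67 F68 F69 F70 F71 F72 F73 F74 F75 F76 F77 F78 F79 F80 F81)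
      done
    have s5': "w i1 * w i2 / (w j1 * w j2) \<in> H" if "i1 \<in> {1..3}" "i2 \<in> {1..3}" "j1 \<in> {1..3}" "j2 \<in> {1..3}" for i1 i2 j1 j2
    proof -
      have "i1 \<in> {1,2,3}" "i2 \<in> {1,2,3}" "j1 \<in> {1,2,3}" "j2 \<in> {1,2,3}" using that by auto
      then show ?thesis using bspec[OF bspec[OF bspec[OF bspec[OF s5]]]] by blast
    qed
    from v show "v \<in> ?H"
      unfolding H_def[symmetric] using s1 s2 s3 s4 s5' by blast
  qed
qed



definition Pc :: "complex \<Rightarrow> nat \<Rightarrow> nat \<Rightarrow> complex" where
  "Pc c i j = [[1, c^2/2 - c, c^2/2, c - 2],
      [1, c/2, - c/2, -1],
      [1, - c/2 + 1, - c/2, c - 2],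
      [1, - c/2, c/2, -1]] ! i ! j"
definition mmc :: "complex \<Rightarrow> nat \<Rightarrow> complex" where
  "mmc c l = [1, (c-2)*(c+1)/2, c, (c-2)*(c+1)/2] ! l"
definition kkc :: "complex \<Rightarrow> nat \<Rightarrow> complex" where
  "kkc c l = [1, c*(c-2)/2, c*c/2, c-2] ! l"
definition Pinvc :: "complex \<Rightarrow> nat \<Rightarrow> nat \<Rightarrow> complex" where
  "Pinvc c k l = mmc c l * Pc c l k / ((c - 1) * (c + 1) * kkc c k)"

lemma sum4: "(\<Sum>l\<le>(3::nat). f l) = f 0 + f 1 + f 2 + (f 3 :: complex)"
  by (simp add: numeral_3_eq_3 numeral_2_eq_2 atMost_Suc add.assoc)

definition Qm :: "complex \<Rightarrow> nat \<Rightarrow> nat \<Rightarrow> complex" where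
  "Qm c k l = [[2*c, c*(c-2)*(c+1), 2*c*c, c*(c-2)*(c+1)],
               [2*c, c*(c+1), -2*c, -c*(c+1)],
               [2*c, -(c-2)*(c+1), -2*c, (c-2)*(c+1)],
               [2*c, -c*(c+1), 2*c*c, -c*(c+1)]] ! k ! l"

lemma PQm: assumes "i \<le> 3" "l \<le> 3"
  shows "(\<Sum>j\<le>3. Pc c i j * Qm c j l) = (if i = l then 2*c*(c*c-1) else 0)"
proof -
  have "i \<in> {0,1,2,3}" "l \<in> {0,1,2,3}" using assms by auto
  then show ?thesis
    unfolding sum4
    apply (elim insertE emptyE)
    apply (simp_all add: Qm_def Pc_def)
    apply (simp_all add: algebra_simps power2_eq_square)
    apply (simp_all add: field_simps)
    done
qed

lemma Pq_Pc: "P_q q i j = Pc (of_nat q) i j"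
  by (simp add: P_q_def Pc_def Let_def)

definition pnum :: "complex \<Rightarrow> nat \<Rightarrow> nat \<Rightarrow> nat \<Rightarrow> complex" where
  "pnum c i j k = (\<Sum>l\<le>3. Pc c l i * Pc c l j * Qm c k l)"

lemma sum_delta3: "k \<le> 3 \<Longrightarrow> (\<Sum>j\<le>(3::nat). f j * (if k = j then 1 else 0)) = (f k :: complex)"
  by (simp add: if_distrib cong: if_cong)

lemma mult4: "(a * e) * (b * (f::complex)) = a * b * (e * f)"
  by (simp add: mult_ac)

lemma card_formula:
  assumes AS: "assoc_scheme X R 3" and FE: "first_eigenmatrix X R 3 (P_q q)"
    and x: "x \<in> X" and y: "y \<in> X" and ij: "i \<le> 3" "j \<le> 3"
  shows "of_nat (card {z\<in>X. R x z = i \<and> R z y = j}) * (2 * of_nat q * (of_nat q * of_nat q - 1))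
         = pnum (of_nat q) i j (R x y)"
proof -
  define c where "c = (of_nat q :: complex)"
  have fin: "finite X" and Rle: "R x y \<le> 3" using AS x y by (auto simp: assoc_scheme_def)
  obtain E :: "nat \<Rightarrow> _" where
    orth: "\<forall>i\<le>3. \<forall>j\<le>3. \<forall>x\<in>X. \<forall>y\<in>X.
            mmult X (E i) (E j) x y = (if i = j then E i x y else 0)" and
    AE: "\<forall>j\<le>3. \<forall>x\<in>X. \<forall>y\<in>X. adj R j x y = (\<Sum>i\<le>3. Pc c i j * E i x y)"
    using FE unfolding first_eigenmatrix_def Pq_Pc c_def by blast
  have "of_nat (card {z\<in>X. R x z = i \<and> R z y = j}) = (\<Sum>z\<in>X. adj R i x z * adj R j z y)"
  proof -
    have "(\<Sum>z\<in>X. adj R i x z * adj R j z y) = (\<Sum>z\<in>X. if R x z = i \<and> R z y = j then 1 else 0)"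
      by (intro sum.cong) (auto simp: adj_def)
    also have "\<dots> = of_nat (card {z\<in>X. R x z = i \<and> R z y = j})"
      using fin by (simp add: sum.If_cases Int_def)
    finally show ?thesis by simp
  qed
  also have "\<dots> = (\<Sum>z\<in>X. (\<Sum>l\<le>3. Pc c l i * E l x z) * (\<Sum>m\<le>3. Pc c m j * E m z y))"
    using AE ij x y by (intro sum.cong) auto
  also have "\<dots> = (\<Sum>z\<in>X. \<Sum>l\<le>3. \<Sum>m\<le>3. Pc c l i * Pc c m j * (E l x z * E m z y))"
    by (rule sum.cong[OF refl], unfold sum_product, rule sum.cong[OF refl], rule sum.cong[OF refl], rule mult4)
  also have "\<dots> = (\<Sum>l\<le>3. \<Sum>z\<in>X. \<Sum>m\<le>3. Pc c l i * Pc c m j * (E l x z * E m z y))"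
    by (rule sum.swap)
  also have "\<dots> = (\<Sum>l\<le>3. \<Sum>m\<le>3. \<Sum>z\<in>X. Pc c l i * Pc c m j * (E l x z * E m z y))"
    by (rule sum.cong[OF refl], rule sum.swap)
  also have "\<dots> = (\<Sum>l\<le>3. \<Sum>m\<le>3. Pc c l i * Pc c m j * (\<Sum>z\<in>X. E l x z * E m z y))"
    by (simp add: sum_distrib_left)
  also have "\<dots> = (\<Sum>l\<le>3. Pc c l i * Pc c l j * E l x y)"
  proof (intro sum.cong refl)
    fix l assume l: "l \<in> {..3::nat}"
    have "(\<Sum>m\<le>3. Pc c l i * Pc c m j * (\<Sum>z\<in>X. E l x z * E m z y))
        = (\<Sum>m\<le>3. Pc c l i * Pc c m j * (if l = m then E l x y else 0))"
      using orth x y l unfolding mmult_def by (intro sum.cong refl) auto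
    also have "\<dots> = Pc c l i * Pc c l j * E l x y"
      using l by (simp add: if_distrib cong: if_cong)
    finally show "(\<Sum>m\<le>3. Pc c l i * Pc c m j * (\<Sum>z\<in>X. E l x z * E m z y)) = Pc c l i * Pc c l j * E l x y" .
  qed
  finally have 1: "of_nat (card {z\<in>X. R x z = i \<and> R z y = j}) = (\<Sum>l\<le>3. Pc c l i * Pc c l j * E l x y)" .
  have 2: "E l x y * (2*c*(c*c-1)) = Qm c (R x y) l" if l: "l \<le> 3" for l
  proof -
    have "Qm c (R x y) l = (\<Sum>k\<le>3. Qm c k l * adj R k x y)"
      using Rle by (simp add: adj_def if_distrib cong: if_cong)
    also have "\<dots> = (\<Sum>k\<le>3. Qm c k l * (\<Sum>i\<le>3. Pc c i k * E i x y))"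
      using AE x y by (intro sum.cong) auto
    also have "\<dots> = (\<Sum>k\<le>3. \<Sum>i\<le>3. Pc c i k * Qm c k l * E i x y)"
      by (simp add: sum_distrib_left mult_ac)
    also have "\<dots> = (\<Sum>i\<le>3. \<Sum>k\<le>3. Pc c i k * Qm c k l * E i x y)"
      by (rule sum.swap)
    also have "\<dots> = (\<Sum>i\<le>3. (\<Sum>k\<le>3. Pc c i k * Qm c k l) * E i x y)"
      by (simp add: sum_distrib_right)
    also have "\<dots> = (\<Sum>i\<le>3. if i = l then 2*c*(c*c-1) * E i x y else 0)"
      using l by (intro sum.cong) (auto simp: PQm)
    also have "\<dots> = E l x y * (2*c*(c*c-1))"
      using l by (simp add: sum.delta mult.commute)
    finally show ?thesis by simp
  qed
  show ?thesis
    unfolding 1 c_def[symmetric] pnum_def sum_distrib_right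
    by (intro sum.cong refl) (metis 2 atMost_iff mult.assoc)
qed



lemma pnum_111: "pnum c 1 1 1 = (c-2)^2*c*(c*c-1)/2"
  unfolding pnum_def sum4 by (simp add: Pc_def Qm_def) (simp add: field_simps power2_eq_square)

lemma pnum_112: "pnum c 1 1 2 = (c-2)^2*c*(c*c-1)/2"
  unfolding pnum_def sum4 by (simp add: Pc_def Qm_def) (simp add: field_simps power2_eq_square)

lemma pnum_121: "pnum c 1 2 1 = c*c*(c-2)*(c*c-1)/2"
  unfolding pnum_def sum4 by (simp add: Pc_def Qm_def) (simp add: field_simps power2_eq_square)

lemma pnum_122: "pnum c 1 2 2 = c*c*(c-2)*(c*c-1)/2"
  unfolding pnum_def sum4 by (simp add: Pc_def Qm_def) (simp add: field_simps power2_eq_square)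

lemma pnum_211: "pnum c 2 1 1 = c*c*(c-2)*(c*c-1)/2"
  unfolding pnum_def sum4 by (simp add: Pc_def Qm_def) (simp add: field_simps power2_eq_square)

lemma pnum_212: "pnum c 2 1 2 = c*c*(c-2)*(c*c-1)/2"
  unfolding pnum_def sum4 by (simp add: Pc_def Qm_def) (simp add: field_simps power2_eq_square)

lemma pnum_132: "pnum c 1 3 2 = (c-2)*c*(c*c-1)"
  unfolding pnum_def sum4 by (simp add: Pc_def Qm_def) (simp add: field_simps power2_eq_square)

lemma pnum_312: "pnum c 3 1 2 = (c-2)*c*(c*c-1)"
  unfolding pnum_def sum4 by (simp add: Pc_def Qm_def) (simp add: field_simps power2_eq_square)

lemma pnum_322: "pnum c 3 2 2 = (c-2)*c*(c*c-1)"
  unfolding pnum_def sum4 by (simp add: Pc_def Qm_def) (simp add: field_simps power2_eq_square)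

lemma pnum_231: "pnum c 2 3 1 = c*c*(c*c-1)"
  unfolding pnum_def sum4 by (simp add: Pc_def Qm_def) (simp add: field_simps power2_eq_square)

lemma pnum_321: "pnum c 3 2 1 = c*c*(c*c-1)"
  unfolding pnum_def sum4 by (simp add: Pc_def Qm_def) (simp add: field_simps power2_eq_square)

lemma tri_of:
  assumes AS: "assoc_scheme X R 3" and FE: "first_eigenmatrix X R 3 (P_q q)"
    and ij: "i \<le> 3" "j \<le> 3" and p: "pnum (of_nat q) i j k \<noteq> 0"
  shows "tri X R i j k"
  unfolding tri_def
proof (intro ballI impI)
  fix x y assume x: "x \<in> X" and y: "y \<in> X" and k: "R x y = k"
  have "of_nat (card {z\<in>X. R x z = i \<and> R z y = j}) * (2 * of_nat q * (of_nat q * of_nat q - 1))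
         = pnum (of_nat q) i j k" using card_formula[OF AS FE x y ij] k by simp
  with p have "card {z\<in>X. R x z = i \<and> R z y = j} \<noteq> 0" by (metis mult_eq_0_iff of_nat_0)
  then have "{z\<in>X. R x z = i \<and> R z y = j} \<noteq> {}" by (metis card.empty)
  then show "\<exists>z\<in>X. R x z = i \<and> R z y = j" by blast
qed

lemma cnz: assumes "q \<ge> (4::nat)"
  shows "(of_nat q::complex) \<noteq> 0" "(of_nat q::complex) - 2 \<noteq> 0" "(of_nat q::complex)*(of_nat q) - 1 \<noteq> 0"
proof -
  have a: "(of_nat q::complex) \<noteq> of_nat 2" "(of_nat q::complex) \<noteq> of_nat 0"
    using assms by (simp only: of_nat_eq_iff; simp)+
  have "q * q \<ge> 4 * 4" using mult_le_mono[OF assms assms] .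
  then have "q * q \<noteq> 1" by linarith
  then have "(of_nat (q*q)::complex) \<noteq> of_nat 1" by (metis of_nat_eq_iff)
  then show "(of_nat q::complex) \<noteq> 0" "(of_nat q::complex) - 2 \<noteq> 0" "(of_nat q::complex)*(of_nat q) - 1 \<noteq> 0"
    using a by auto
qed

theorem lemma5p4:
  fixes q :: nat and X :: "'a set" and R :: "'a \<Rightarrow> 'a \<Rightarrow> nat" and w :: "nat \<Rightarrow> complex"
  assumes "even q" and "q \<ge> 4"
    and "assoc_scheme X R 3" and "symmetric_scheme X R"
    and "first_eigenmatrix X R 3 (P_q q)"
    and "type_II X (\<lambda>x y. adj R 0 x y + (\<Sum>i\<in>{1..3}. w i * adj R i x y))"
  shows "haagerup_set X (\<lambda>x y. adj R 0 x y + (\<Sum>i\<in>{1..3}. w i * adj R i x y)) =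
           {w i ^ 2 | i. i \<in> {1..3}} \<union> {inverse (w i) ^ 2 | i. i \<in> {1..3}}
         \<union> {w i1 * w i2 / w i3 | i1 i2 i3. i1 \<in> {1..3} \<and> i2 \<in> {1..3} \<and> i3 \<in> {1..3}
                                         \<and> inter_num X R i2 i3 i1 > 0}
         \<union> {inverse (w i1 * w i2 / w i3) | i1 i2 i3. i1 \<in> {1..3} \<and> i2 \<in> {1..3} \<and> i3 \<in> {1..3}
                                         \<and> inter_num X R i2 i3 i1 > 0}
         \<union> {w i1 * w i2 / (w j1 * w j2) | i1 i2 j1 j2.
               i1 \<in> {1..3} \<and> i2 \<in> {1..3} \<and> j1 \<in> {1..3} \<and> j2 \<in> {1..3}}"
proof -
  note AS = assms(3) and SY = assms(4) and FE = assms(5) and T2 = assms(6)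
  define W where "W = (\<lambda>x y. adj R 0 x y + (\<Sum>i\<in>{1..3}. w i * adj R i x y))"
  have Wv: "W x y = (if R x y = 0 then 1 else w (R x y))" if "x \<in> X" "y \<in> X" for x y
  proof -
    have le: "R x y \<le> 3" by (rule as_le[OF AS that])
    have "(\<Sum>i\<in>{1..3}. w i * adj R i x y) = (\<Sum>i\<in>{1..3}. if R x y = i then w i else 0)"
      by (intro sum.cong) (auto simp: adj_def)
    also have "\<dots> = (if R x y \<in> {1..3} then w (R x y) else 0)"
      by (rule sum.delta') simp
    finally show ?thesis using le unfolding W_def by (auto simp: adj_def)
  qed
  have nzg: "w i \<noteq> 0" if i: "i \<in> {1..3}" for i
  proof -
    obtain x y where xy: "x \<in> X" "y \<in> X" "R x y = i" using as_real[OF AS] i by force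
    have "W x y \<noteq> 0" using T2 xy unfolding type_II_def W_def by blast
    then show ?thesis using Wv[OF xy(1,2)] xy(3) i by simp
  qed
  have c: "(of_nat q::complex) \<noteq> 0" "(of_nat q::complex) - 2 \<noteq> 0" "(of_nat q::complex)*(of_nat q) - 1 \<noteq> 0"
    using cnz[OF assms(2)] by auto
  have T111: "tri X R 1 1 1"
    by (rule tri_of[OF AS FE], simp, simp, unfold pnum_111, use c in simp)
  have T112: "tri X R 1 1 2"
    by (rule tri_of[OF AS FE], simp, simp, unfold pnum_112, use c in simp)
  have T121: "tri X R 1 2 1"
    by (rule tri_of[OF AS FE], simp, simp, unfold pnum_121, use c in simp)
  have T122: "tri X R 1 2 2"
    by (rule tri_of[OF AS FE], simp, simp, unfold pnum_122, use c in simp)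
  have T132: "tri X R 1 3 2"
    by (rule tri_of[OF AS FE], simp, simp, unfold pnum_132, use c in simp)
  have T211: "tri X R 2 1 1"
    by (rule tri_of[OF AS FE], simp, simp, unfold pnum_211, use c in simp)
  have T212: "tri X R 2 1 2"
    by (rule tri_of[OF AS FE], simp, simp, unfold pnum_212, use c in simp)
  have T231: "tri X R 2 3 1"
    by (rule tri_of[OF AS FE], simp, simp, unfold pnum_231, use c in simp)
  have T312: "tri X R 3 1 2"
    by (rule tri_of[OF AS FE], simp, simp, unfold pnum_312, use c in simp)
  have T321: "tri X R 3 2 1"
    by (rule tri_of[OF AS FE], simp, simp, unfold pnum_321, use c in simp)
  have T322: "tri X R 3 2 2"
    by (rule tri_of[OF AS FE], simp, simp, unfold pnum_322, use c in simp)
  show ?thesis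
    unfolding W_def[symmetric]
    by (rule main_gen[OF AS SY Wv nzg nzg nzg T111 T112 T121 T122 T132 T211 T212 T231 T312 T321 T322]) simp_all
qed


end
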